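(* Let $\mathcal{H}$ be a finite-dimensional Hilbert space, $\ket{h}\in\mathcal{H}$ a unit vector, and $W_1,\ldots,W_l$ subspaces of $\mathcal{H}$. Let $0<\alpha_j<1$ for $j\in[l]$, set $\alpha:=\min_j\alpha_j$ and $\epsilon_j:=\|\Pi_{W_j}\ket{h}\|_2^2$. Let $\mathbf{W}_{(\alpha_1,\ldots,\alpha_l)}$ be the $(\alpha_1,\ldots,\alpha_l)$-tilted span of $W_1,\ldots,W_l$ (defined in the context), and view $\ket h$ as a vector of $\tilde{\mathcal{H}}$ via the identity embedding. Then $$\max_{j\in[l]}(1-\alpha_j)\epsilon_j\ \le\ \|\Pi_{\mathbf{W}_{(\alpha_1,\ldots,\alpha_l)}}\ket{h}\|_2^2\ \le\ \frac{1-\alpha}{\alpha}\sum_{j=1}^l\epsilon_j.$$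
   Context: Tilted span: Let $\mathcal{H}_1,\ldots,\mathcal{H}_l$ be Hilbert spaces each of dimension $\dim\mathcal{H}$, and $\tilde{\mathcal{H}}:=\mathcal{H}\oplus\mathcal{H}_1\oplus\cdots\oplus\mathcal{H}_l$ (orthogonal direct sum). Let $\mathcal{T}_j$ be a linear map taking $\mathcal{H}$ isometrically onto $\mathcal{H}_j$. For $0<\alpha_j<1$ define the isometric embedding $\mathcal{T}_{j,\alpha_j}:=\sqrt{1-\alpha_j}\,\mathbb{1}_{\mathcal{H}}+\sqrt{\alpha_j}\,\mathcal{T}_j:\mathcal{H}\to\tilde{\mathcal{H}}$, where $\mathbb{1}_{\mathcal{H}}$ is the identity embedding of $\mathcal{H}$ into $\tilde{\mathcal{H}}$. For subspaces $W_1,\dots,W_l\le\mathcal{H}$, the $(\alpha_1,\ldots,\alpha_l)$-tilted span is the subspace $\mathbf{W}_{(\alpha_1,\ldots,\alpha_l)}:=\sum_{j=1}^l\mathcal{T}_{j,\alpha_j}(W_j)\le\tilde{\mathcal{H}}$ (a sum, not necessarily direct); if all $\alpha_j=\alpha$ it is written $\mathbf{W}_\alpha$. $\Pi_X$ denotes the orthogonal projection onto a subspace $X$. *)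

theory Defs
  imports "HOL-Analysis.Analysis"
begin

text \<open>The finite-dimensional complex Hilbert space H is modelled as complex^'n
  with the standard (conjugate-linear in the first argument) inner product; the
  norm on complex^'n is the Euclidean 2-norm.\<close>

definition cinner :: "complex^'n \<Rightarrow> complex^'n \<Rightarrow> complex" where
  "cinner x y = (\<Sum>i\<in>UNIV. cnj (x $ i) * y $ i)"

definition csubspace :: "(complex^'n) set \<Rightarrow> bool" where
  "csubspace S \<longleftrightarrow> 0 \<in> S \<and> (\<forall>x\<in>S. \<forall>y\<in>S. x + y \<in> S) \<and> (\<forall>c. \<forall>x\<in>S. c *s x \<in> S)"

definition cproj :: "(complex^'n) set \<Rightarrow> complex^'n \<Rightarrow> complex^'n" where
  "cproj S h = (THE p. p \<in> S \<and> (\<forall>w\<in>S. cinner w (h - p) = 0))"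

definition cunitary :: "(complex^'n \<Rightarrow> complex^'n) \<Rightarrow> bool" where
  "cunitary U \<longleftrightarrow> (\<forall>x y. U (x + y) = U x + U y) \<and> (\<forall>c x. U (c *s x) = c *s U x)
     \<and> (\<forall>x. norm (U x) = norm x) \<and> surj U"

text \<open>The big space H~ = H \<oplus> H_1 \<oplus> ... \<oplus> H_l is complex^('n \<times> 'l option):
  block None is H, block Some j is H_j.\<close>
definition embed0 :: "complex^'n \<Rightarrow> complex^('n \<times> 'l::finite option)" where
  "embed0 x = (\<chi> p. if snd p = None then x $ fst p else 0)"

definition embedj :: "'l::finite \<Rightarrow> complex^'n \<Rightarrow> complex^('n \<times> 'l::finite option)" where
  "embedj j x = (\<chi> p. if snd p = Some j then x $ fst p else 0)"

text \<open>T_j = embedj j \<circ> U j is a general isometry of H onto H_j (U j unitary);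
  T_{j,a} = sqrt(1-a) 1_H + sqrt a T_j.\<close>
definition tilt :: "('l::finite \<Rightarrow> complex^'n \<Rightarrow> complex^'n) \<Rightarrow> real \<Rightarrow> 'l \<Rightarrow> complex^'n
                    \<Rightarrow> complex^('n \<times> 'l::finite option)" where
  "tilt U a j x = complex_of_real (sqrt (1 - a)) *s embed0 x
                 + complex_of_real (sqrt a) *s embedj j (U j x)"

definition tilted_span :: "('l::finite \<Rightarrow> complex^'n \<Rightarrow> complex^'n) \<Rightarrow> ('l \<Rightarrow> real)
      \<Rightarrow> ('l \<Rightarrow> (complex^'n) set) \<Rightarrow> (complex^('n \<times> 'l option)) set" where
  "tilted_span U a W = {(\<Sum>j\<in>UNIV. tilt U (a j) j (w j)) | w. \<forall>j. w j \<in> W j}"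

end

theory Submission
  imports Defs
begin


lemma sc_real: "complex_of_real r *s (x::complex^'m) = r *\<^sub>R x"
  by (simp add: vec_eq_iff) (simp add: scaleR_conv_of_real)

lemma inner_cinner: "inner x y = Re (cinner x (y::complex^'m))"
  by (simp add: inner_vec_def cinner_def Re_sum inner_complex_def)

lemma cinner_i: "cinner (\<i> *s x) (y::complex^'m) = - \<i> * cinner x y"
  by (simp add: cinner_def sum_distrib_left mult.assoc)

lemma csub_subspace: "csubspace S \<Longrightarrow> subspace (S::(complex^'m) set)"
  unfolding csubspace_def subspace_def by (metis sc_real)

lemma cproj_prop:
  assumes "csubspace (S::(complex^'m) set)"
  shows "cproj S h \<in> S \<and> (\<forall>w\<in>S. inner w (h - cproj S h) = 0)"
proof -
  have sp: "span S = S" using csub_subspace[OF assms] by (simp add: span_eq_iff)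
  obtain y z where y: "y \<in> S" and o: "\<And>w. w \<in> S \<Longrightarrow> orthogonal z w" and hz: "h = y + z"
    using orthogonal_subspace_decomp_exists[of S h] sp by metis
  have iS: "\<i> *s w \<in> S" if "w \<in> S" for w using assms that unfolding csubspace_def by blast
  have c: "cinner w (h - y) = 0" if w: "w \<in> S" for w
  proof -
    have "Re (cinner w z) = 0" using o[OF w] by (simp add: orthogonal_def inner_cinner[symmetric] inner_commute)
    moreover have "Re (cinner (\<i> *s w) z) = 0" using o[OF iS[OF w]]
      by (simp add: orthogonal_def inner_cinner[symmetric] inner_commute)
    hence "Im (cinner w z) = 0" by (simp add: cinner_i)
    ultimately show ?thesis using hz by (simp add: complex_eq_iff)
  qed
  have "cproj S h = y" unfolding cproj_def
  proof (rule the_equality)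
    show "y \<in> S \<and> (\<forall>w\<in>S. cinner w (h - y) = 0)" using y c by blast
  next
    fix p assume p: "p \<in> S \<and> (\<forall>w\<in>S. cinner w (h - p) = 0)"
    have d: "p - y \<in> S" using csub_subspace[OF assms] p y by (simp add: subspace_diff)
    have "inner (p - y) (h - p) = 0" "inner (p - y) (h - y) = 0"
      using p c[OF d] d by (auto simp: inner_cinner)
    hence "inner (p - y) (p - y) = 0" by (simp add: inner_diff_right)
    thus "p = y" by simp
  qed
  thus ?thesis using y c by (simp add: inner_cinner)
qed




lemma sum_pair_opt: "(\<Sum>p\<in>(UNIV::('n::finite \<times> 'l::finite option) set). f p) = (\<Sum>i\<in>UNIV. \<Sum>k\<in>UNIV. f (i,k))"
  unfolding UNIV_Times_UNIV[symmetric] sum.cartesian_product by simp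

lemma e0_inner: "inner (embed0 x :: complex^('n::finite \<times> 'l::finite option)) (embed0 y) = inner x y"
proof -
  have h: "\<And>i k. inner (if k = None then x $ i else 0) (if k = None then y $ i else 0) = (if k = None then inner (x$i) (y$i) else 0)"
    by simp
  show ?thesis unfolding inner_vec_def embed0_def sum_pair_opt by (simp only: fst_conv snd_conv vec_lambda_beta h) simp
qed

lemma ej_inner: "inner (embedj j x :: complex^('n::finite \<times> 'l::finite option)) (embedj k y) = (if j = k then inner x y else 0)"
proof -
  have h: "\<And>i m. inner (if m = Some j then x $ i else 0) (if m = Some k then y $ i else 0) = (if j = k \<and> m = Some j then inner (x$i) (y$i) else 0)"
    by simp
  show ?thesis unfolding inner_vec_def embedj_def sum_pair_opt by (simp only: fst_conv snd_conv vec_lambda_beta h) simp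
qed

lemma e0j_inner: "inner (embed0 x :: complex^('n::finite \<times> 'l::finite option)) (embedj k y) = 0"
proof -
  have h: "\<And>i m. inner (if m = None then x $ i else 0) (if m = Some k then y $ i else 0) = 0"
    by simp
  show ?thesis unfolding inner_vec_def embed0_def embedj_def sum_pair_opt by (simp only: fst_conv snd_conv vec_lambda_beta h) simp
qed

lemma tilt_eq: "tilt U a j x = sqrt (1 - a) *\<^sub>R embed0 x + sqrt a *\<^sub>R embedj j (U j x)"
  by (simp add: tilt_def sc_real)




context
  fixes U :: "'l::finite \<Rightarrow> complex^'n::finite \<Rightarrow> complex^'n"
  assumes U: "\<And>j. cunitary (U j)"
begin

lemma U_add: "U j (x + y) = U j x + U j y" and U_smult: "U j (c *s x) = c *s U j x"
  and U_norm: "norm (U j x) = norm x"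
  using U[of j] unfolding cunitary_def by auto

lemma U_zero: "U j 0 = 0" using U_norm[of j 0] by simp

lemma tilt_add: "(tilt U a j (x + y) :: complex^('n \<times> 'l option)) = tilt U a j x + tilt U a j y"
  by (simp add: tilt_def embed0_def embedj_def vec_eq_iff U_add algebra_simps)

lemma tilt_smult: "(tilt U a j (c *s x) :: complex^('n \<times> 'l option)) = c *s tilt U a j x"
  by (simp add: tilt_def embed0_def embedj_def vec_eq_iff U_smult algebra_simps)

lemma tilt_zero: "(tilt U a j 0 :: complex^('n \<times> 'l option)) = 0"
  by (simp add: tilt_def embed0_def embedj_def vec_eq_iff U_zero)

lemma norm_tilt: assumes "0 \<le> a" "a \<le> 1"
  shows "norm (tilt U a j x :: complex^('n \<times> 'l option)) = norm x"
proof -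
  have "(norm (tilt U a j x :: complex^('n \<times> 'l option)))\<^sup>2 = (1 - a) * inner x x + a * inner (U j x) (U j x)"
    unfolding tilt_eq power2_norm_eq_inner
    using assms by (simp add: inner_add_left inner_add_right e0_inner ej_inner e0j_inner inner_commute[of "embedj _ _" "embed0 _"] algebra_simps)
  also have "\<dots> = (norm x)\<^sup>2" using U_norm[of j x]
    by (simp add: power2_norm_eq_inner[symmetric] algebra_simps)
  finally show ?thesis by (simp add: power2_eq_iff_nonneg)
qed

lemma inner_tilt_e0: "inner (tilt U a j x :: complex^('n \<times> 'l option)) (embed0 h) = sqrt (1 - a) * inner x h"
  unfolding tilt_eq by (simp add: inner_add_left e0_inner inner_commute[of "embedj _ _" "embed0 _"] e0j_inner)

lemma tilted_csub:
  assumes "\<And>j. csubspace (W j)"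
  shows "csubspace (tilted_span U a W :: (complex^('n \<times> 'l option)) set)"
  unfolding csubspace_def
proof (intro conjI ballI allI)
  show "0 \<in> tilted_span U a W" unfolding tilted_span_def
    by (rule CollectI, rule exI[of _ "\<lambda>_. 0"]) (use assms in \<open>auto simp: csubspace_def tilt_zero\<close>)
next
  fix x y assume "x \<in> tilted_span U a W" "y \<in> tilted_span U a W"
  then obtain w v where w: "\<forall>j. w j \<in> W j" "x = (\<Sum>j\<in>UNIV. tilt U (a j) j (w j))"
     and v: "\<forall>j. v j \<in> W j" "y = (\<Sum>j\<in>UNIV. tilt U (a j) j (v j))"
    unfolding tilted_span_def by blast
  show "x + y \<in> tilted_span U a W" unfolding tilted_span_def
    by (rule CollectI, rule exI[of _ "\<lambda>j. w j + v j"])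
       (use assms w v in \<open>auto simp: csubspace_def tilt_add sum.distrib\<close>)
next
  fix c x assume "x \<in> tilted_span U a W"
  then obtain w where w: "\<forall>j. w j \<in> W j" "x = (\<Sum>j\<in>UNIV. tilt U (a j) j (w j))"
    unfolding tilted_span_def by blast
  have "c *s x = (\<Sum>j\<in>UNIV. tilt U (a j) j (c *s w j))"
    using w(2) by (simp add: tilt_smult scalar_mult_eq_scaleR vec_eq_iff sum_component sum_distrib_left)
  then show "c *s x \<in> tilted_span U a W" unfolding tilted_span_def
    using assms w by (auto simp: csubspace_def)
qed

end



lemma norm_sum_tilt:
  fixes U :: "'l::finite \<Rightarrow> complex^'n::finite \<Rightarrow> complex^'n"
  assumes U: "\<And>j. cunitary (U j)" and a: "\<And>j. 0 \<le> a j \<and> a j \<le> 1"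
  shows "(\<Sum>j\<in>UNIV. a j * (norm (w j))\<^sup>2) \<le> (norm (\<Sum>j\<in>UNIV. tilt U (a j) j (w j) :: complex^('n \<times> 'l option)))\<^sup>2"
proof -
  define A :: "complex^('n \<times> 'l option)" where "A = (\<Sum>j\<in>UNIV. sqrt (1 - a j) *\<^sub>R embed0 (w j))"
  define B :: "complex^('n \<times> 'l option)" where "B = (\<Sum>j\<in>UNIV. sqrt (a j) *\<^sub>R embedj j (U j (w j)))"
  have S: "(\<Sum>j\<in>UNIV. tilt U (a j) j (w j) :: complex^('n \<times> 'l option)) = A + B"
    unfolding A_def B_def tilt_eq by (simp add: sum.distrib)
  have AB: "inner A B = 0" unfolding A_def B_def
    by (simp add: inner_sum_left inner_sum_right e0j_inner)
  have h: "\<And>x y. sqrt (a x) * (if x = y then U x (w x) \<bullet> U y (w y) else 0) = (if x = y then sqrt (a y) * (U y (w y) \<bullet> U y (w y)) else 0)"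
    by auto
  have h2: "\<And>y. sqrt (a y) * (sqrt (a y) * t) = a y * t" for t
    using a by (simp add: mult.assoc[symmetric])
  have Un: "\<And>y. norm (U y (w y)) = norm (w y)" using U unfolding cunitary_def by auto
  have BB: "inner B B = (\<Sum>j\<in>UNIV. a j * (norm (w j))\<^sup>2)" unfolding B_def inner_sum_left inner_sum_right inner_scaleR_left inner_scaleR_right ej_inner
    by (simp only: h sum.delta' finite UNIV_I if_True h2) (simp add: h2 Un power2_norm_eq_inner[symmetric])
  have "(norm (A + B))\<^sup>2 = inner A A + 2 * inner A B + inner B B"
    by (simp add: power2_norm_eq_inner inner_add_left inner_add_right inner_commute[of B A])
  also have "\<dots> \<ge> inner B B" using AB by simp
  finally show ?thesis using S BB by simp
qed




theorem proposition2:
  fixes h :: "complex^'n"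
    and W :: "'l::finite \<Rightarrow> (complex^'n) set"
    and U :: "'l \<Rightarrow> complex^'n \<Rightarrow> complex^'n"
    and \<alpha> :: "'l \<Rightarrow> real"
  assumes "norm h = 1"
    and "\<And>j. csubspace (W j)"
    and "\<And>j. cunitary (U j)"
    and "\<And>j. 0 < \<alpha> j \<and> \<alpha> j < 1"
  shows "Max (range (\<lambda>j. (1 - \<alpha> j) * (norm (cproj (W j) h))\<^sup>2))
           \<le> (norm (cproj (tilted_span U \<alpha> W) (embed0 h :: complex^('n \<times> 'l option))))\<^sup>2
      \<and> (norm (cproj (tilted_span U \<alpha> W) (embed0 h :: complex^('n \<times> 'l option))))\<^sup>2
           \<le> (1 - Min (range \<alpha>)) / Min (range \<alpha>) * (\<Sum>j\<in>UNIV. (norm (cproj (W j) h))\<^sup>2)"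
proof -
  note Wsub = assms(2) and U = assms(3) and al = assms(4)
  define V where "V = (tilted_span U \<alpha> W :: (complex^('n \<times> 'l option)) set)"
  define P where "P = cproj V (embed0 h)"
  define q where "q j = cproj (W j) h" for j
  have Vc: "csubspace V" unfolding V_def by (rule tilted_csub[OF U Wsub])
  have PV: "P \<in> V" and Po: "\<And>v. v \<in> V \<Longrightarrow> inner v (embed0 h - P) = 0"
    using cproj_prop[OF Vc, of "embed0 h"] unfolding P_def by auto
  have vP: "\<And>v. v \<in> V \<Longrightarrow> inner v (embed0 h) = inner v P"
    using Po by (simp add: inner_diff_right)
  have qW: "\<And>j. q j \<in> W j" and qo: "\<And>j w. w \<in> W j \<Longrightarrow> inner w (h - q j) = 0"
    using cproj_prop[OF Wsub] unfolding q_def by auto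
  have wq: "\<And>j w. w \<in> W j \<Longrightarrow> inner w h = inner w (q j)"
    using qo by (simp add: inner_diff_right)
  have qq: "\<And>j. inner (q j) h = (norm (q j))\<^sup>2"
    using wq[OF qW] by (simp add: power2_norm_eq_inner)
  have NP: "(norm P)\<^sup>2 = inner P (embed0 h)"
    using vP[OF PV] by (simp add: power2_norm_eq_inner)
  have lower: "(1 - \<alpha> j) * (norm (q j))\<^sup>2 \<le> (norm P)\<^sup>2" for j
  proof -
    let ?v = "tilt U (\<alpha> j) j (q j) :: complex^('n \<times> 'l option)"
    have t: "\<And>k. (tilt U (\<alpha> k) k (if k = j then q j else 0) :: complex^('n \<times> 'l option)) = (if k = j then ?v else 0)"
      by (simp add: tilt_zero[OF U])
    have "?v \<in> V" unfolding V_def tilted_span_def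
      by (rule CollectI, rule exI[of _ "\<lambda>k. if k = j then q j else 0"])
         (use Wsub qW in \<open>auto simp: t csubspace_def\<close>)
    hence "sqrt (1 - \<alpha> j) * (norm (q j))\<^sup>2 = inner ?v P"
      using vP[of ?v] inner_tilt_e0[OF U, where a="\<alpha> j" and j=j and x="q j" and h=h] qq[of j] by simp
    also have "\<dots> \<le> norm ?v * norm P" by (rule norm_cauchy_schwarz)
    also have "norm ?v = norm (q j)" using al[of j] by (intro norm_tilt[OF U]) auto
    finally have 1: "sqrt (1 - \<alpha> j) * (norm (q j))\<^sup>2 \<le> norm (q j) * norm P" .
    have 2: "sqrt (1 - \<alpha> j) * norm (q j) \<le> norm P"
    proof (cases "norm (q j) = 0")
      case True then show ?thesis by simp
    next
      case False
      hence "norm (q j) > 0" by simp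
      with 1 show ?thesis by (simp add: power2_eq_square mult.commute mult.left_commute)
    qed
    have "(sqrt (1 - \<alpha> j) * norm (q j))\<^sup>2 \<le> (norm P)\<^sup>2"
      by (rule power_mono[OF 2]) (use al[of j] in simp)
    thus ?thesis using al[of j] by (simp add: power_mult_distrib)
  qed
  define m where "m = Min (range \<alpha>)"
  have mr: "m \<in> range \<alpha>" unfolding m_def by (rule Min_in) auto
  have m01: "0 < m" "m < 1" using mr al by auto
  have mle: "\<And>j. m \<le> \<alpha> j" unfolding m_def by (rule Min_le) auto
  obtain w where w: "\<And>j. w j \<in> W j" and Pw: "P = (\<Sum>j\<in>UNIV. tilt U (\<alpha> j) j (w j))"
    using PV unfolding V_def tilted_span_def by blast
  define N where "N = (norm P)\<^sup>2"
  define S where "S = (\<Sum>j\<in>UNIV. norm (w j) * norm (q j))"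
  define X where "X = (\<Sum>j\<in>UNIV. (norm (w j))\<^sup>2)"
  define E where "E = (\<Sum>j\<in>UNIV. (norm (q j))\<^sup>2)"
  have "N = (\<Sum>j\<in>UNIV. sqrt (1 - \<alpha> j) * inner (w j) (q j))"
    unfolding N_def NP unfolding Pw by (simp add: inner_sum_left inner_tilt_e0[OF U] wq[OF w])
  also have "\<dots> \<le> (\<Sum>j\<in>UNIV. sqrt (1 - m) * (norm (w j) * norm (q j)))"
  proof (rule sum_mono)
    fix j
    have "sqrt (1 - \<alpha> j) * inner (w j) (q j) \<le> sqrt (1 - \<alpha> j) * (norm (w j) * norm (q j))"
      by (rule mult_left_mono[OF norm_cauchy_schwarz]) (use al[of j] in \<open>simp add: less_imp_le\<close>)
    also have "\<dots> \<le> sqrt (1 - m) * (norm (w j) * norm (q j))"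
      by (rule mult_right_mono) (use mle[of j] in auto)
    finally show "sqrt (1 - \<alpha> j) * inner (w j) (q j) \<le> sqrt (1 - m) * (norm (w j) * norm (q j))" .
  qed
  also have "\<dots> = sqrt (1 - m) * S" unfolding S_def by (simp add: sum_distrib_left)
  finally have NS: "N \<le> sqrt (1 - m) * S" .
  have CS: "S\<^sup>2 \<le> X * E" unfolding S_def X_def E_def by (rule Cauchy_Schwarz_ineq_sum)
  have "(\<Sum>j\<in>UNIV. \<alpha> j * (norm (w j))\<^sup>2) \<le> N"
    unfolding N_def Pw by (rule norm_sum_tilt[OF U]) (use al in \<open>auto simp: less_imp_le\<close>)
  moreover have "m * X \<le> (\<Sum>j\<in>UNIV. \<alpha> j * (norm (w j))\<^sup>2)"
    unfolding X_def sum_distrib_left by (rule sum_mono) (simp add: mle mult_right_mono)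
  ultimately have mX: "m * X \<le> N" by simp
  have N0: "0 \<le> N" unfolding N_def by simp
  have E0: "0 \<le> E" unfolding E_def by (simp add: sum_nonneg)
  have N2: "N\<^sup>2 \<le> (1 - m) * (X * E)"
  proof -
    have "N\<^sup>2 \<le> (sqrt (1 - m) * S)\<^sup>2" by (rule power_mono[OF NS N0])
    also have "\<dots> = (1 - m) * S\<^sup>2" using m01 by (simp add: power_mult_distrib)
    also have "\<dots> \<le> (1 - m) * (X * E)" using CS m01 by (intro mult_left_mono) auto
    finally show ?thesis .
  qed
  have upper: "N \<le> (1 - m) / m * E"
  proof (cases "N = 0")
    case True then show ?thesis using m01 E0 by simp
  next
    case False
    hence Np: "N > 0" using N0 by simp
    have "m * N\<^sup>2 \<le> (1 - m) * ((m * X) * E)" using mult_left_mono[OF N2, of m] m01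
      by (simp add: algebra_simps)
    also have "\<dots> \<le> (1 - m) * (N * E)"
      using mX E0 m01 by (intro mult_left_mono mult_right_mono) auto
    finally have "N * (m * N) \<le> N * ((1 - m) * E)" by (simp add: power2_eq_square algebra_simps)
    hence "m * N \<le> (1 - m) * E" using Np by simp
    thus ?thesis using m01 by (simp add: pos_le_divide_eq mult.commute)
  qed
  have maxf: "Max (range (\<lambda>j. (1 - \<alpha> j) * (norm (q j))\<^sup>2)) \<le> (norm P)\<^sup>2"
    by (rule Max.boundedI) (auto simp: lower)
  have e1: "cproj (tilted_span U \<alpha> W) (embed0 h :: complex^('n \<times> 'l option)) = P" unfolding P_def V_def ..
  have e2: "\<And>j. cproj (W j) h = q j" unfolding q_def ..
  show ?thesis unfolding e1 e2 m_def[symmetric] using maxf upper unfolding N_def E_def by blast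
qed


end
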